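(* Let $C$ be a concrete category (each object has an underlying set and morphisms are functions composed as functions) such that (i) set-theoretic finite products and equalizers are also finite products and equalizers in $C$, and (ii) for every $C$-morphism $f:X\to Y$ there are a $C$-object $U$ and a $C$-morphism $u:U\to X\times Y$ with the graph of $f$ equal to the range of $u$. Then $\mathrm{Rel}(C)$, equipped with the cartesian product as monoidal product and the cartesian trace, is a traced symmetric monoidal category having $C$ as a subcategory. If moreover a function between $C$-objects is a $C$-morphism if and only if its graph is the range of some $C$-morphism, then this subcategory consists precisely of those morphisms of $\mathrm{Rel}(C)$ which are set-theoretic functions.
   Context: A $C$-relation between $C$-objects $X$ and $Y$ is a relation $r\subseteq X\times Y$ which equals the range of some $C$-morphism $u:U\to X\times Y$ for some $C$-object $U$. $\mathrm{Rel}(C)$ is the category with the same objects as $C$, whose morphisms from $X$ to $Y$ are the $C$-relations between $X$ and $Y$, composed by relational composition. The cartesian trace of a relation $r\subseteq (X\times Z)\times(Y\times Z)$ is the relation $\mathsf{Tr}(r)\subseteq X\times Y$ with $(x,y)\in\mathsf{Tr}(r)$ iff there is $z\in Z$ with $((x,z),(y,z))\in r$. *)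

theory Defs
  imports "HOL-Library.FuncSet"
begin

section \<open>Abstract (non-strict) traced symmetric monoidal categories\<close>

text \<open>A category is given by a set of objects Ob, hom-sets Hom X Y, composition
  cmp g f (first f, then g) and identities idm X.\<close>

definition is_category ::
  "'o set \<Rightarrow> ('o \<Rightarrow> 'o \<Rightarrow> 'm set) \<Rightarrow> ('m \<Rightarrow> 'm \<Rightarrow> 'm) \<Rightarrow> ('o \<Rightarrow> 'm) \<Rightarrow> bool" where
  "is_category Ob Hom cmp idm \<longleftrightarrow>
     (\<forall>X\<in>Ob. idm X \<in> Hom X X) \<and>
     (\<forall>X\<in>Ob. \<forall>Y\<in>Ob. \<forall>Z\<in>Ob. \<forall>f\<in>Hom X Y. \<forall>g\<in>Hom Y Z. cmp g f \<in> Hom X Z) \<and>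
     (\<forall>X\<in>Ob. \<forall>Y\<in>Ob. \<forall>f\<in>Hom X Y. cmp f (idm X) = f \<and> cmp (idm Y) f = f) \<and>
     (\<forall>W\<in>Ob. \<forall>X\<in>Ob. \<forall>Y\<in>Ob. \<forall>Z\<in>Ob. \<forall>f\<in>Hom W X. \<forall>g\<in>Hom X Y. \<forall>h\<in>Hom Y Z.
        cmp h (cmp g f) = cmp (cmp h g) f)"

definition is_iso ::
  "('o \<Rightarrow> 'o \<Rightarrow> 'm set) \<Rightarrow> ('m \<Rightarrow> 'm \<Rightarrow> 'm) \<Rightarrow> ('o \<Rightarrow> 'm) \<Rightarrow> 'o \<Rightarrow> 'o \<Rightarrow> 'm \<Rightarrow> bool" where
  "is_iso Hom cmp idm X Y f \<longleftrightarrow>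
     f \<in> Hom X Y \<and> (\<exists>g\<in>Hom Y X. cmp g f = idm X \<and> cmp f g = idm Y)"

definition cinv ::
  "('o \<Rightarrow> 'o \<Rightarrow> 'm set) \<Rightarrow> ('m \<Rightarrow> 'm \<Rightarrow> 'm) \<Rightarrow> ('o \<Rightarrow> 'm) \<Rightarrow> 'o \<Rightarrow> 'o \<Rightarrow> 'm \<Rightarrow> 'm" where
  "cinv Hom cmp idm X Y f = (THE g. g \<in> Hom Y X \<and> cmp g f = idm X \<and> cmp f g = idm Y)"

text \<open>Monoidal category: tensor T on objects, tm on morphisms, unit I,
  associator a X Y Z : (X\<otimes>Y)\<otimes>Z \<rightarrow> X\<otimes>(Y\<otimes>Z), unitors l X : I\<otimes>X \<rightarrow> X, r X : X\<otimes>I \<rightarrow> X.\<close>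

definition is_monoidal_category ::
  "'o set \<Rightarrow> ('o \<Rightarrow> 'o \<Rightarrow> 'm set) \<Rightarrow> ('m \<Rightarrow> 'm \<Rightarrow> 'm) \<Rightarrow> ('o \<Rightarrow> 'm)
   \<Rightarrow> ('o \<Rightarrow> 'o \<Rightarrow> 'o) \<Rightarrow> ('m \<Rightarrow> 'm \<Rightarrow> 'm) \<Rightarrow> 'o
   \<Rightarrow> ('o \<Rightarrow> 'o \<Rightarrow> 'o \<Rightarrow> 'm) \<Rightarrow> ('o \<Rightarrow> 'm) \<Rightarrow> ('o \<Rightarrow> 'm) \<Rightarrow> bool" where
  "is_monoidal_category Ob Hom cmp idm T tm I a l r \<longleftrightarrow>
     is_category Ob Hom cmp idm \<and>
     I \<in> Ob \<and>
     (\<forall>X\<in>Ob. \<forall>Y\<in>Ob. T X Y \<in> Ob) \<and>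
     (\<forall>X\<in>Ob. \<forall>Y\<in>Ob. \<forall>X'\<in>Ob. \<forall>Y'\<in>Ob. \<forall>f\<in>Hom X Y. \<forall>g\<in>Hom X' Y'.
        tm f g \<in> Hom (T X X') (T Y Y')) \<and>
     (\<forall>X\<in>Ob. \<forall>Y\<in>Ob. tm (idm X) (idm Y) = idm (T X Y)) \<and>
     (\<forall>X\<in>Ob. \<forall>Y\<in>Ob. \<forall>Z\<in>Ob. \<forall>X'\<in>Ob. \<forall>Y'\<in>Ob. \<forall>Z'\<in>Ob.
        \<forall>f\<in>Hom X Y. \<forall>g\<in>Hom Y Z. \<forall>f'\<in>Hom X' Y'. \<forall>g'\<in>Hom Y' Z'.
        tm (cmp g f) (cmp g' f') = cmp (tm g g') (tm f f')) \<and>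
     (\<forall>X\<in>Ob. \<forall>Y\<in>Ob. \<forall>Z\<in>Ob. is_iso Hom cmp idm (T (T X Y) Z) (T X (T Y Z)) (a X Y Z)) \<and>
     (\<forall>X\<in>Ob. \<forall>Y\<in>Ob. \<forall>Z\<in>Ob. \<forall>X'\<in>Ob. \<forall>Y'\<in>Ob. \<forall>Z'\<in>Ob.
        \<forall>f\<in>Hom X X'. \<forall>g\<in>Hom Y Y'. \<forall>h\<in>Hom Z Z'.
        cmp (a X' Y' Z') (tm (tm f g) h) = cmp (tm f (tm g h)) (a X Y Z)) \<and>
     (\<forall>X\<in>Ob. is_iso Hom cmp idm (T I X) X (l X)) \<and>
     (\<forall>X\<in>Ob. \<forall>Y\<in>Ob. \<forall>f\<in>Hom X Y. cmp (l Y) (tm (idm I) f) = cmp f (l X)) \<and>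
     (\<forall>X\<in>Ob. is_iso Hom cmp idm (T X I) X (r X)) \<and>
     (\<forall>X\<in>Ob. \<forall>Y\<in>Ob. \<forall>f\<in>Hom X Y. cmp (r Y) (tm f (idm I)) = cmp f (r X)) \<and>
     (\<forall>W\<in>Ob. \<forall>X\<in>Ob. \<forall>Y\<in>Ob. \<forall>Z\<in>Ob.
        cmp (a W X (T Y Z)) (a (T W X) Y Z) =
        cmp (tm (idm W) (a X Y Z)) (cmp (a W (T X Y) Z) (tm (a W X Y) (idm Z)))) \<and>
     (\<forall>X\<in>Ob. \<forall>Y\<in>Ob. cmp (tm (idm X) (l Y)) (a X I Y) = tm (r X) (idm Y))"

definition is_symmetric_monoidal_category ::
  "'o set \<Rightarrow> ('o \<Rightarrow> 'o \<Rightarrow> 'm set) \<Rightarrow> ('m \<Rightarrow> 'm \<Rightarrow> 'm) \<Rightarrow> ('o \<Rightarrow> 'm)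
   \<Rightarrow> ('o \<Rightarrow> 'o \<Rightarrow> 'o) \<Rightarrow> ('m \<Rightarrow> 'm \<Rightarrow> 'm) \<Rightarrow> 'o
   \<Rightarrow> ('o \<Rightarrow> 'o \<Rightarrow> 'o \<Rightarrow> 'm) \<Rightarrow> ('o \<Rightarrow> 'm) \<Rightarrow> ('o \<Rightarrow> 'm) \<Rightarrow> ('o \<Rightarrow> 'o \<Rightarrow> 'm) \<Rightarrow> bool" where
  "is_symmetric_monoidal_category Ob Hom cmp idm T tm I a l r s \<longleftrightarrow>
     is_monoidal_category Ob Hom cmp idm T tm I a l r \<and>
     (\<forall>X\<in>Ob. \<forall>Y\<in>Ob. s X Y \<in> Hom (T X Y) (T Y X)) \<and>
     (\<forall>X\<in>Ob. \<forall>Y\<in>Ob. \<forall>X'\<in>Ob. \<forall>Y'\<in>Ob. \<forall>f\<in>Hom X X'. \<forall>g\<in>Hom Y Y'.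
        cmp (s X' Y') (tm f g) = cmp (tm g f) (s X Y)) \<and>
     (\<forall>X\<in>Ob. \<forall>Y\<in>Ob. cmp (s Y X) (s X Y) = idm (T X Y)) \<and>
     (\<forall>X\<in>Ob. \<forall>Y\<in>Ob. \<forall>Z\<in>Ob.
        cmp (a Y Z X) (cmp (s X (T Y Z)) (a X Y Z)) =
        cmp (tm (idm Y) (s X Z)) (cmp (a Y X Z) (tm (s X Y) (idm Z))))"

text \<open>Traced symmetric monoidal category (Joyal--Street--Verity axioms, in the
  non-strict form): Tr U X Y maps Hom (X\<otimes>U) (Y\<otimes>U) to Hom X Y.\<close>

definition is_traced_symmetric_monoidal_category ::
  "'o set \<Rightarrow> ('o \<Rightarrow> 'o \<Rightarrow> 'm set) \<Rightarrow> ('m \<Rightarrow> 'm \<Rightarrow> 'm) \<Rightarrow> ('o \<Rightarrow> 'm)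
   \<Rightarrow> ('o \<Rightarrow> 'o \<Rightarrow> 'o) \<Rightarrow> ('m \<Rightarrow> 'm \<Rightarrow> 'm) \<Rightarrow> 'o
   \<Rightarrow> ('o \<Rightarrow> 'o \<Rightarrow> 'o \<Rightarrow> 'm) \<Rightarrow> ('o \<Rightarrow> 'm) \<Rightarrow> ('o \<Rightarrow> 'm) \<Rightarrow> ('o \<Rightarrow> 'o \<Rightarrow> 'm)
   \<Rightarrow> ('o \<Rightarrow> 'o \<Rightarrow> 'o \<Rightarrow> 'm \<Rightarrow> 'm) \<Rightarrow> bool" where
  "is_traced_symmetric_monoidal_category Ob Hom cmp idm T tm I a l r s Tr \<longleftrightarrow>
     is_symmetric_monoidal_category Ob Hom cmp idm T tm I a l r s \<and>
     (\<forall>U\<in>Ob. \<forall>X\<in>Ob. \<forall>Y\<in>Ob. \<forall>f\<in>Hom (T X U) (T Y U). Tr U X Y f \<in> Hom X Y) \<and>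
     \<comment> \<open>tightening (naturality in X and Y)\<close>
     (\<forall>U\<in>Ob. \<forall>X\<in>Ob. \<forall>Y\<in>Ob. \<forall>X'\<in>Ob. \<forall>Y'\<in>Ob.
        \<forall>f\<in>Hom (T X U) (T Y U). \<forall>g\<in>Hom X' X. \<forall>h\<in>Hom Y Y'.
        Tr U X' Y' (cmp (tm h (idm U)) (cmp f (tm g (idm U)))) = cmp h (cmp (Tr U X Y f) g)) \<and>
     \<comment> \<open>sliding (dinaturality in U)\<close>
     (\<forall>U\<in>Ob. \<forall>U'\<in>Ob. \<forall>X\<in>Ob. \<forall>Y\<in>Ob.
        \<forall>f\<in>Hom (T X U) (T Y U'). \<forall>g\<in>Hom U' U.
        Tr U X Y (cmp (tm (idm Y) g) f) = Tr U' X Y (cmp f (tm (idm X) g))) \<and>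
     \<comment> \<open>vanishing I\<close>
     (\<forall>X\<in>Ob. \<forall>Y\<in>Ob. \<forall>f\<in>Hom (T X I) (T Y I).
        cmp (Tr I X Y f) (r X) = cmp (r Y) f) \<and>
     \<comment> \<open>vanishing II\<close>
     (\<forall>U\<in>Ob. \<forall>V\<in>Ob. \<forall>X\<in>Ob. \<forall>Y\<in>Ob. \<forall>f\<in>Hom (T X (T U V)) (T Y (T U V)).
        Tr (T U V) X Y f =
        Tr U X Y (Tr V (T X U) (T Y U)
          (cmp (cinv Hom cmp idm (T (T Y U) V) (T Y (T U V)) (a Y U V)) (cmp f (a X U V))))) \<and>
     \<comment> \<open>superposing\<close>
     (\<forall>U\<in>Ob. \<forall>X\<in>Ob. \<forall>Y\<in>Ob. \<forall>Z\<in>Ob. \<forall>f\<in>Hom (T X U) (T Y U).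
        Tr U (T Z X) (T Z Y)
          (cmp (cinv Hom cmp idm (T (T Z Y) U) (T Z (T Y U)) (a Z Y U))
               (cmp (tm (idm Z) f) (a Z X U)))
        = tm (idm Z) (Tr U X Y f)) \<and>
     \<comment> \<open>yanking\<close>
     (\<forall>U\<in>Ob. Tr U U U (s U U) = idm U)"

section \<open>Concrete categories whose objects are sets\<close>

text \<open>Elements live in a universe type 'u; set-theoretic pairs are given by an
  injective pairing function pair; the one-point set is {one}.\<close>

definition injective_pairing :: "('u \<Rightarrow> 'u \<Rightarrow> 'u) \<Rightarrow> bool" where
  "injective_pairing pair \<longleftrightarrow> (\<forall>a b c d. pair a b = pair c d \<longrightarrow> a = c \<and> b = d)"

definition ptimes :: "('u \<Rightarrow> 'u \<Rightarrow> 'u) \<Rightarrow> 'u set \<Rightarrow> 'u set \<Rightarrow> 'u set" where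
  "ptimes pair X Y = {pair x y | x y. x \<in> X \<and> y \<in> Y}"

definition concrete_category :: "'u set set \<Rightarrow> ('u set \<Rightarrow> 'u set \<Rightarrow> ('u \<Rightarrow> 'u) set) \<Rightarrow> bool" where
  "concrete_category Obj Mor \<longleftrightarrow>
     (\<forall>X\<in>Obj. \<forall>Y\<in>Obj. Mor X Y \<subseteq> X \<rightarrow>\<^sub>E Y) \<and>
     (\<forall>X\<in>Obj. (\<lambda>x\<in>X. x) \<in> Mor X X) \<and>
     (\<forall>X\<in>Obj. \<forall>Y\<in>Obj. \<forall>Z\<in>Obj. \<forall>f\<in>Mor X Y. \<forall>g\<in>Mor Y Z. compose X g f \<in> Mor X Z)"

definition set_products_are_products ::
  "'u set set \<Rightarrow> ('u set \<Rightarrow> 'u set \<Rightarrow> ('u \<Rightarrow> 'u) set) \<Rightarrow> ('u \<Rightarrow> 'u \<Rightarrow> 'u) \<Rightarrow> 'u \<Rightarrow> bool" where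
  "set_products_are_products Obj Mor pair one \<longleftrightarrow>
     {one} \<in> Obj \<and>
     (\<forall>X\<in>Obj. (\<lambda>x\<in>X. one) \<in> Mor X {one}) \<and>
     (\<forall>X\<in>Obj. \<forall>Y\<in>Obj.
        ptimes pair X Y \<in> Obj \<and>
        (\<exists>p\<in>Mor (ptimes pair X Y) X. \<forall>x\<in>X. \<forall>y\<in>Y. p (pair x y) = x) \<and>
        (\<exists>q\<in>Mor (ptimes pair X Y) Y. \<forall>x\<in>X. \<forall>y\<in>Y. q (pair x y) = y) \<and>
        (\<forall>Z\<in>Obj. \<forall>f\<in>Mor Z X. \<forall>g\<in>Mor Z Y.
           (\<lambda>z\<in>Z. pair (f z) (g z)) \<in> Mor Z (ptimes pair X Y)))"

definition set_equalizers_are_equalizers ::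
  "'u set set \<Rightarrow> ('u set \<Rightarrow> 'u set \<Rightarrow> ('u \<Rightarrow> 'u) set) \<Rightarrow> bool" where
  "set_equalizers_are_equalizers Obj Mor \<longleftrightarrow>
     (\<forall>X\<in>Obj. \<forall>Y\<in>Obj. \<forall>f\<in>Mor X Y. \<forall>g\<in>Mor X Y.
        {x\<in>X. f x = g x} \<in> Obj \<and>
        (\<lambda>x\<in>{x\<in>X. f x = g x}. x) \<in> Mor {x\<in>X. f x = g x} X \<and>
        (\<forall>Z\<in>Obj. \<forall>h\<in>Mor Z X. (\<forall>z\<in>Z. f (h z) = g (h z)) \<longrightarrow> h \<in> Mor Z {x\<in>X. f x = g x}))"

definition graph :: "'u set \<Rightarrow> ('u \<Rightarrow> 'u) \<Rightarrow> ('u \<times> 'u) set" where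
  "graph X f = {(x, f x) | x. x \<in> X}"

definition range_rel :: "('u \<Rightarrow> 'u \<Rightarrow> 'u) \<Rightarrow> 'u set \<Rightarrow> ('u \<Rightarrow> 'u) \<Rightarrow> ('u \<times> 'u) set" where
  "range_rel pair U u = {(x, y). pair x y \<in> u ` U}"

definition is_C_relation ::
  "'u set set \<Rightarrow> ('u set \<Rightarrow> 'u set \<Rightarrow> ('u \<Rightarrow> 'u) set) \<Rightarrow> ('u \<Rightarrow> 'u \<Rightarrow> 'u)
   \<Rightarrow> 'u set \<Rightarrow> 'u set \<Rightarrow> ('u \<times> 'u) set \<Rightarrow> bool" where
  "is_C_relation Obj Mor pair X Y r \<longleftrightarrow>
     r \<subseteq> X \<times> Y \<and> (\<exists>U\<in>Obj. \<exists>u\<in>Mor U (ptimes pair X Y). r = range_rel pair U u)"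

definition graphs_are_ranges ::
  "'u set set \<Rightarrow> ('u set \<Rightarrow> 'u set \<Rightarrow> ('u \<Rightarrow> 'u) set) \<Rightarrow> ('u \<Rightarrow> 'u \<Rightarrow> 'u) \<Rightarrow> bool" where
  "graphs_are_ranges Obj Mor pair \<longleftrightarrow>
     (\<forall>X\<in>Obj. \<forall>Y\<in>Obj. \<forall>f\<in>Mor X Y. is_C_relation Obj Mor pair X Y (graph X f))"

section \<open>The category Rel(C)\<close>

definition RelHom ::
  "'u set set \<Rightarrow> ('u set \<Rightarrow> 'u set \<Rightarrow> ('u \<Rightarrow> 'u) set) \<Rightarrow> ('u \<Rightarrow> 'u \<Rightarrow> 'u)
   \<Rightarrow> 'u set \<Rightarrow> 'u set \<Rightarrow> ('u \<times> 'u) set set" where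
  "RelHom Obj Mor pair X Y = {r. is_C_relation Obj Mor pair X Y r}"

text \<open>rel_cmp s r = "first r, then s" (relational composition).\<close>
definition rel_cmp :: "('u \<times> 'u) set \<Rightarrow> ('u \<times> 'u) set \<Rightarrow> ('u \<times> 'u) set" where
  "rel_cmp s r = r O s"

definition rel_tensor :: "('u \<Rightarrow> 'u \<Rightarrow> 'u) \<Rightarrow> ('u \<times> 'u) set \<Rightarrow> ('u \<times> 'u) set \<Rightarrow> ('u \<times> 'u) set" where
  "rel_tensor pair r s = {(pair x x', pair y y') | x x' y y'. (x, y) \<in> r \<and> (x', y') \<in> s}"

definition rel_assoc :: "('u \<Rightarrow> 'u \<Rightarrow> 'u) \<Rightarrow> 'u set \<Rightarrow> 'u set \<Rightarrow> 'u set \<Rightarrow> ('u \<times> 'u) set" where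
  "rel_assoc pair X Y Z =
     {(pair (pair x y) z, pair x (pair y z)) | x y z. x \<in> X \<and> y \<in> Y \<and> z \<in> Z}"

definition rel_lunit :: "('u \<Rightarrow> 'u \<Rightarrow> 'u) \<Rightarrow> 'u \<Rightarrow> 'u set \<Rightarrow> ('u \<times> 'u) set" where
  "rel_lunit pair one X = {(pair one x, x) | x. x \<in> X}"

definition rel_runit :: "('u \<Rightarrow> 'u \<Rightarrow> 'u) \<Rightarrow> 'u \<Rightarrow> 'u set \<Rightarrow> ('u \<times> 'u) set" where
  "rel_runit pair one X = {(pair x one, x) | x. x \<in> X}"

definition rel_sym :: "('u \<Rightarrow> 'u \<Rightarrow> 'u) \<Rightarrow> 'u set \<Rightarrow> 'u set \<Rightarrow> ('u \<times> 'u) set" where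
  "rel_sym pair X Y = {(pair x y, pair y x) | x y. x \<in> X \<and> y \<in> Y}"

definition cart_trace :: "('u \<Rightarrow> 'u \<Rightarrow> 'u) \<Rightarrow> 'u set \<Rightarrow> ('u \<times> 'u) set \<Rightarrow> ('u \<times> 'u) set" where
  "cart_trace pair Z r = {(x, y). \<exists>z\<in>Z. (pair x z, pair y z) \<in> r}"

text \<open>C is (via f \<mapsto> graph f, identity on objects) a subcategory of Rel(C).\<close>
definition C_subcategory_of_RelC ::
  "'u set set \<Rightarrow> ('u set \<Rightarrow> 'u set \<Rightarrow> ('u \<Rightarrow> 'u) set) \<Rightarrow> ('u \<Rightarrow> 'u \<Rightarrow> 'u) \<Rightarrow> bool" where
  "C_subcategory_of_RelC Obj Mor pair \<longleftrightarrow>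
     (\<forall>X\<in>Obj. \<forall>Y\<in>Obj. \<forall>f\<in>Mor X Y. graph X f \<in> RelHom Obj Mor pair X Y) \<and>
     (\<forall>X\<in>Obj. graph X (\<lambda>x\<in>X. x) = Id_on X) \<and>
     (\<forall>X\<in>Obj. \<forall>Y\<in>Obj. \<forall>Z\<in>Obj. \<forall>f\<in>Mor X Y. \<forall>g\<in>Mor Y Z.
        graph X (compose X g f) = rel_cmp (graph Y g) (graph X f)) \<and>
     (\<forall>X\<in>Obj. \<forall>Y\<in>Obj. inj_on (graph X) (Mor X Y))"

definition is_function_rel :: "'u set \<Rightarrow> 'u set \<Rightarrow> ('u \<times> 'u) set \<Rightarrow> bool" where
  "is_function_rel X Y r \<longleftrightarrow> r \<subseteq> X \<times> Y \<and> (\<forall>x\<in>X. \<exists>!y. (x, y) \<in> r)"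

end

theory Submission
  imports Defs
begin

locale relC =
  fixes Obj :: "'u set set"
    and Mor :: "'u set \<Rightarrow> 'u set \<Rightarrow> ('u \<Rightarrow> 'u) set"
    and pair :: "'u \<Rightarrow> 'u \<Rightarrow> 'u"
    and one :: 'u
  assumes inj: "injective_pairing pair"
    and cc: "concrete_category Obj Mor"
    and prods: "set_products_are_products Obj Mor pair one"
    and eqs: "set_equalizers_are_equalizers Obj Mor"
    and grs: "graphs_are_ranges Obj Mor pair"
begin

abbreviation PT where "PT X Y \<equiv> ptimes pair X Y"
abbreviation H where "H \<equiv> RelHom Obj Mor pair"

lemma pair_eq[simp]: "pair a b = pair c d \<longleftrightarrow> a = c \<and> b = d"
  using inj unfolding injective_pairing_def by blast

lemma mem_PT[simp]: "pair a b \<in> PT X Y \<longleftrightarrow> a \<in> X \<and> b \<in> Y"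
  unfolding ptimes_def by auto

lemma PT_E: assumes "w \<in> PT X Y" obtains x y where "w = pair x y" "x \<in> X" "y \<in> Y"
  using assms unfolding ptimes_def by auto

definition pfst where "pfst w = (THE x. \<exists>y. w = pair x y)"
definition psnd where "psnd w = (THE y. \<exists>x. w = pair x y)"
lemma pfst[simp]: "pfst (pair a b) = a" unfolding pfst_def by (rule the_equality) auto
lemma psnd[simp]: "psnd (pair a b) = b" unfolding psnd_def by (rule the_equality) auto

definition pr1 where "pr1 X Y = restrict pfst (PT X Y)"
definition pr2 where "pr2 X Y = restrict psnd (PT X Y)"
definition tup where "tup Z f g = (\<lambda>z\<in>Z. pair (f z) (g z))"

lemma pr1_eval[simp]: "x \<in> X \<Longrightarrow> y \<in> Y \<Longrightarrow> pr1 X Y (pair x y) = x"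
  unfolding pr1_def by simp
lemma pr2_eval[simp]: "x \<in> X \<Longrightarrow> y \<in> Y \<Longrightarrow> pr2 X Y (pair x y) = y"
  unfolding pr2_def by simp
lemma tup_eval[simp]: "z \<in> Z \<Longrightarrow> tup Z f g z = pair (f z) (g z)"
  unfolding tup_def by simp

declare compose_eq[simp]

lemma mor_fun: "X \<in> Obj \<Longrightarrow> Y \<in> Obj \<Longrightarrow> f \<in> Mor X Y \<Longrightarrow> f \<in> X \<rightarrow>\<^sub>E Y"
  using cc unfolding concrete_category_def by blast
lemma mor_app: "X \<in> Obj \<Longrightarrow> Y \<in> Obj \<Longrightarrow> f \<in> Mor X Y \<Longrightarrow> x \<in> X \<Longrightarrow> f x \<in> Y"
  using mor_fun by blast
lemma id_mor: "X \<in> Obj \<Longrightarrow> (\<lambda>x\<in>X. x) \<in> Mor X X"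
  using cc unfolding concrete_category_def by blast
lemma comp_mor: "X \<in> Obj \<Longrightarrow> Y \<in> Obj \<Longrightarrow> Z \<in> Obj \<Longrightarrow> f \<in> Mor X Y \<Longrightarrow> g \<in> Mor Y Z \<Longrightarrow> compose X g f \<in> Mor X Z"
  using cc unfolding concrete_category_def by blast
lemma one_obj: "{one} \<in> Obj" using prods unfolding set_products_are_products_def by blast
lemma const_mor: "X \<in> Obj \<Longrightarrow> (\<lambda>x\<in>X. one) \<in> Mor X {one}"
  using prods unfolding set_products_are_products_def by blast
lemma PT_obj: "X \<in> Obj \<Longrightarrow> Y \<in> Obj \<Longrightarrow> PT X Y \<in> Obj"
  using prods unfolding set_products_are_products_def by blast
lemma tup_mor: "X \<in> Obj \<Longrightarrow> Y \<in> Obj \<Longrightarrow> Z \<in> Obj \<Longrightarrow> f \<in> Mor Z X \<Longrightarrow> g \<in> Mor Z Y \<Longrightarrow> tup Z f g \<in> Mor Z (PT X Y)"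
  using prods unfolding set_products_are_products_def tup_def by blast

lemma pr1_mor: assumes "X \<in> Obj" "Y \<in> Obj" shows "pr1 X Y \<in> Mor (PT X Y) X"
proof -
  obtain p where p: "p \<in> Mor (PT X Y) X" "\<forall>x\<in>X. \<forall>y\<in>Y. p (pair x y) = x"
    using prods assms unfolding set_products_are_products_def by meson
  have e: "p \<in> extensional (PT X Y)" using mor_fun[OF PT_obj[OF assms] assms(1) p(1)] by (simp add: PiE_iff)
  have "p = pr1 X Y"
  proof (rule extensionalityI[OF e])
    show "pr1 X Y \<in> extensional (PT X Y)" unfolding pr1_def by simp
    fix w assume "w \<in> PT X Y" then obtain x y where "w = pair x y" "x \<in> X" "y \<in> Y" by (rule PT_E)
    then show "p w = pr1 X Y w" using p(2) by simp
  qed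
  then show ?thesis using p(1) by (simp only:)
qed

lemma pr2_mor: assumes "X \<in> Obj" "Y \<in> Obj" shows "pr2 X Y \<in> Mor (PT X Y) Y"
proof -
  obtain p where p: "p \<in> Mor (PT X Y) Y" "\<forall>x\<in>X. \<forall>y\<in>Y. p (pair x y) = y"
    using prods assms unfolding set_products_are_products_def by meson
  have e: "p \<in> extensional (PT X Y)" using mor_fun[OF PT_obj[OF assms] assms(2) p(1)] by (simp add: PiE_iff)
  have "p = pr2 X Y"
  proof (rule extensionalityI[OF e])
    show "pr2 X Y \<in> extensional (PT X Y)" unfolding pr2_def by simp
    fix w assume "w \<in> PT X Y" then obtain x y where "w = pair x y" "x \<in> X" "y \<in> Y" by (rule PT_E)
    then show "p w = pr2 X Y w" using p(2) by simp
  qed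
  then show ?thesis using p(1) by (simp only:)
qed

lemma eq_obj: "X \<in> Obj \<Longrightarrow> Y \<in> Obj \<Longrightarrow> f \<in> Mor X Y \<Longrightarrow> g \<in> Mor X Y \<Longrightarrow> {x\<in>X. f x = g x} \<in> Obj"
  using eqs unfolding set_equalizers_are_equalizers_def by blast
lemma eq_incl: "X \<in> Obj \<Longrightarrow> Y \<in> Obj \<Longrightarrow> f \<in> Mor X Y \<Longrightarrow> g \<in> Mor X Y \<Longrightarrow> (\<lambda>x\<in>{x\<in>X. f x = g x}. x) \<in> Mor {x\<in>X. f x = g x} X"
  using eqs unfolding set_equalizers_are_equalizers_def by blast

definition defin where "defin A S \<longleftrightarrow> (\<exists>U\<in>Obj. \<exists>u\<in>Mor U A. S = u ` U)"

lemma D0: "A \<in> Obj \<Longrightarrow> defin A A"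
proof -
  assume A: "A \<in> Obj"
  have "(\<lambda>x\<in>A. x) ` A = A" by auto
  then show ?thesis unfolding defin_def using A id_mor[OF A] by metis
qed

lemma D1: assumes "A \<in> Obj" "B \<in> Obj" "defin A S" "m \<in> Mor A B" shows "defin B (m ` S)"
proof -
  obtain U u where u: "U \<in> Obj" "u \<in> Mor U A" "S = u ` U" using assms(3) unfolding defin_def by blast
  have "compose U m u \<in> Mor U B" using comp_mor u assms by blast
  moreover have "compose U m u ` U = m ` S" unfolding u(3) image_image by (rule image_cong) auto
  ultimately show ?thesis using u unfolding defin_def by blast
qed

lemma D2: assumes "A \<in> Obj" "B \<in> Obj" "defin A S" "defin B T"
  shows "defin (PT A B) {pair a b |a b. a \<in> S \<and> b \<in> T}"
proof -
  obtain U u where u: "U \<in> Obj" "u \<in> Mor U A" "S = u ` U" using assms(3) unfolding defin_def by blast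
  obtain V v where v: "V \<in> Obj" "v \<in> Mor V B" "T = v ` V" using assms(4) unfolding defin_def by blast
  let ?W = "PT U V"
  let ?m = "tup ?W (compose ?W u (pr1 U V)) (compose ?W v (pr2 U V))"
  have W: "?W \<in> Obj" using PT_obj u v by blast
  have "?m \<in> Mor ?W (PT A B)"
    by (rule tup_mor[OF assms(1,2) W comp_mor[OF W u(1) assms(1) pr1_mor[OF u(1) v(1)] u(2)]
         comp_mor[OF W v(1) assms(2) pr2_mor[OF u(1) v(1)] v(2)]])
  moreover have "?m ` ?W = {pair a b |a b. a \<in> S \<and> b \<in> T}"
  proof
    show "?m ` ?W \<subseteq> {pair a b |a b. a \<in> S \<and> b \<in> T}" using u v by (auto elim!: PT_E)
    show "{pair a b |a b. a \<in> S \<and> b \<in> T} \<subseteq> ?m ` ?W"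
    proof
      fix w assume "w \<in> {pair a b |a b. a \<in> S \<and> b \<in> T}"
      then obtain x y where xy: "x \<in> U" "y \<in> V" "w = pair (u x) (v y)" using u(3) v(3) by blast
      then show "w \<in> ?m ` ?W"
        by (intro image_eqI[of _ _ "pair x y"]) auto
    qed
  qed
  ultimately show ?thesis using W unfolding defin_def by blast
qed

lemma D3: assumes "A \<in> Obj" "B \<in> Obj" "defin A S" "f \<in> Mor A B" "g \<in> Mor A B"
  shows "defin A {a\<in>S. f a = g a}"
proof -
  obtain U u where u: "U \<in> Obj" "u \<in> Mor U A" "S = u ` U" using assms(3) unfolding defin_def by blast
  let ?f = "compose U f u" and ?g = "compose U g u"
  have fg: "?f \<in> Mor U B" "?g \<in> Mor U B" using comp_mor u assms by blast+
  let ?E = "{x\<in>U. ?f x = ?g x}"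
  have E: "?E \<in> Obj" using eq_obj[OF u(1) assms(2) fg] .
  have i: "(\<lambda>x\<in>?E. x) \<in> Mor ?E U" using eq_incl[OF u(1) assms(2) fg] .
  have "compose ?E u (\<lambda>x\<in>?E. x) \<in> Mor ?E A" using comp_mor[OF E u(1) assms(1) i u(2)] .
  moreover have "compose ?E u (\<lambda>x\<in>?E. x) ` ?E = {a\<in>S. f a = g a}"
    using u by auto
  ultimately show ?thesis using E unfolding defin_def by blast
qed

definition pc :: "('u \<times> 'u) set \<Rightarrow> 'u set" where "pc r = {pair x y |x y. (x, y) \<in> r}"

lemma C_rel_iff: assumes "X \<in> Obj" "Y \<in> Obj"
  shows "r \<in> H X Y \<longleftrightarrow> r \<subseteq> X \<times> Y \<and> defin (PT X Y) (pc r)"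
proof
  assume "r \<in> H X Y"
  then obtain U u where r: "r \<subseteq> X \<times> Y" "U \<in> Obj" "u \<in> Mor U (PT X Y)" "r = range_rel pair U u"
    unfolding RelHom_def is_C_relation_def by blast
  have sub: "u ` U \<subseteq> PT X Y" using mor_app[OF r(2) PT_obj[OF assms] r(3)] by blast
  have "pc r = u ` U"
  proof
    show "pc r \<subseteq> u ` U" using r(4) unfolding pc_def range_rel_def by auto
    show "u ` U \<subseteq> pc r"
    proof
      fix w assume w: "w \<in> u ` U"
      then obtain x y where "w = pair x y" using sub by (blast elim: PT_E)
      then show "w \<in> pc r" using w r(4) unfolding pc_def range_rel_def by auto
    qed
  qed
  then show "r \<subseteq> X \<times> Y \<and> defin (PT X Y) (pc r)" using r unfolding defin_def by blast
next
  assume a: "r \<subseteq> X \<times> Y \<and> defin (PT X Y) (pc r)"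
  then obtain U u where u: "U \<in> Obj" "u \<in> Mor U (PT X Y)" "pc r = u ` U" unfolding defin_def by blast
  have "range_rel pair U u = r" unfolding range_rel_def u(3)[symmetric] pc_def by auto
  then show "r \<in> H X Y" using a u unfolding RelHom_def is_C_relation_def by blast
qed

lemma H_sub: "X \<in> Obj \<Longrightarrow> Y \<in> Obj \<Longrightarrow> r \<in> H X Y \<Longrightarrow> r \<subseteq> X \<times> Y"
  using C_rel_iff by blast

end

context relC begin

lemma pc_pair[simp]: "pair x y \<in> pc r \<longleftrightarrow> (x, y) \<in> r"
  unfolding pc_def by auto
lemma pc_E: assumes "w \<in> pc r" obtains x y where "w = pair x y" "(x, y) \<in> r"
  using assms unfolding pc_def by auto

lemma graph_H: "X \<in> Obj \<Longrightarrow> Y \<in> Obj \<Longrightarrow> f \<in> Mor X Y \<Longrightarrow> graph X f \<in> H X Y"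
  using grs unfolding graphs_are_ranges_def RelHom_def by blast

lemma graph_id: "graph X (\<lambda>x\<in>X. x) = Id_on X"
  unfolding graph_def Id_on_def by auto

lemma id_H: "X \<in> Obj \<Longrightarrow> Id_on X \<in> H X X"
  using graph_H[OF _ _ id_mor] graph_id by metis

lemma comp_H: assumes X: "X \<in> Obj" and Y: "Y \<in> Obj" and Z: "Z \<in> Obj"
  and r: "r \<in> H X Y" and s: "s \<in> H Y Z"
  shows "r O s \<in> H X Z"
proof -
  have rs: "r \<subseteq> X \<times> Y" "s \<subseteq> Y \<times> Z" using H_sub[OF X Y r] H_sub[OF Y Z s] .
  have XY: "PT X Y \<in> Obj" and YZ: "PT Y Z \<in> Obj" and XZ: "PT X Z \<in> Obj" using PT_obj[OF X Y] PT_obj[OF Y Z] PT_obj[OF X Z] .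
  define A where "A = PT (PT X Y) (PT Y Z)"
  have A: "A \<in> Obj" unfolding A_def using PT_obj[OF XY YZ] .
  define P where "P = {pair a b |a b. a \<in> pc r \<and> b \<in> pc s}"
  have dP: "defin A P" unfolding A_def P_def
    by (rule D2[OF XY YZ conjunct2[OF iffD1[OF C_rel_iff[OF X Y] r]] conjunct2[OF iffD1[OF C_rel_iff[OF Y Z] s]]])
  define f where "f = compose A (pr2 X Y) (pr1 (PT X Y) (PT Y Z))"
  define g where "g = compose A (pr1 Y Z) (pr2 (PT X Y) (PT Y Z))"
  have f: "f \<in> Mor A Y" unfolding f_def A_def
    by (rule comp_mor[OF PT_obj[OF XY YZ] XY Y pr1_mor[OF XY YZ] pr2_mor[OF X Y]])
  have g: "g \<in> Mor A Y" unfolding g_def A_def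
    by (rule comp_mor[OF PT_obj[OF XY YZ] YZ Y pr2_mor[OF XY YZ] pr1_mor[OF Y Z]])
  define m where "m = tup A (compose A (pr1 X Y) (pr1 (PT X Y) (PT Y Z))) (compose A (pr2 Y Z) (pr2 (PT X Y) (PT Y Z)))"
  have m: "m \<in> Mor A (PT X Z)" unfolding m_def
    unfolding A_def
    by (rule tup_mor[OF X Z PT_obj[OF XY YZ] comp_mor[OF PT_obj[OF XY YZ] XY X pr1_mor[OF XY YZ] pr1_mor[OF X Y]]
         comp_mor[OF PT_obj[OF XY YZ] YZ Z pr2_mor[OF XY YZ] pr2_mor[OF Y Z]]])
  have dE: "defin A {a\<in>P. f a = g a}" by (rule D3[OF A Y dP f g])
  have d: "defin (PT X Z) (m ` {a\<in>P. f a = g a})" by (rule D1[OF A XZ dE m])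
  have "pc (r O s) = m ` {a\<in>P. f a = g a}"
  proof
    show "pc (r O s) \<subseteq> m ` {a\<in>P. f a = g a}"
    proof
      fix w assume "w \<in> pc (r O s)"
      then obtain x y z where w: "w = pair x z" "(x, y) \<in> r" "(y, z) \<in> s" by (auto elim: pc_E)
      have mem: "x \<in> X" "y \<in> Y" "z \<in> Z" using w rs by auto
      have inP: "pair (pair x y) (pair y z) \<in> P" unfolding P_def using w(2,3) by auto
      have fg: "f (pair (pair x y) (pair y z)) = g (pair (pair x y) (pair y z))"
        using mem by (simp add: f_def g_def A_def)
      have "m (pair (pair x y) (pair y z)) = w" using mem w(1) by (simp add: m_def A_def)
      then show "w \<in> m ` {a\<in>P. f a = g a}" using inP fg by blast
    qed
    show "m ` {a\<in>P. f a = g a} \<subseteq> pc (r O s)"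
    proof
      fix w assume "w \<in> m ` {a\<in>P. f a = g a}"
      then obtain e where e: "e \<in> P" "f e = g e" "w = m e" by blast
      then obtain a b where ab: "e = pair a b" "a \<in> pc r" "b \<in> pc s" unfolding P_def by blast
      obtain x y where a: "a = pair x y" "(x, y) \<in> r" using ab(2) by (rule pc_E)
      obtain y' z where b: "b = pair y' z" "(y', z) \<in> s" using ab(3) by (rule pc_E)
      have xy: "e = pair (pair x y) (pair y' z)" "(x, y) \<in> r" "(y', z) \<in> s" using ab a b by auto
      have mem: "x \<in> X" "y \<in> Y" "y' \<in> Y" "z \<in> Z" using xy rs by auto
      have "y = y'" using e(2) xy mem by (simp add: f_def g_def A_def)
      then show "w \<in> pc (r O s)" using e(3) xy mem by (auto simp: m_def A_def)
    qed
  qed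
  then show ?thesis using C_rel_iff[OF X Z] d rs relcomp_subset_Sigma[OF rs] by simp
qed


lemma defin_pc: "X \<in> Obj \<Longrightarrow> Y \<in> Obj \<Longrightarrow> r \<in> H X Y \<Longrightarrow> defin (PT X Y) (pc r)"
  using C_rel_iff by blast

lemma H_intro: "X \<in> Obj \<Longrightarrow> Y \<in> Obj \<Longrightarrow> r \<subseteq> X \<times> Y \<Longrightarrow> defin (PT X Y) (pc r) \<Longrightarrow> r \<in> H X Y"
  using C_rel_iff by blast

lemma pr1c_mor: "A \<in> Obj \<Longrightarrow> B \<in> Obj \<Longrightarrow> X \<in> Obj \<Longrightarrow> Y \<in> Obj \<Longrightarrow> f \<in> Mor A (PT X Y) \<Longrightarrow> compose A (pr1 X Y) f \<in> Mor A X"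
  by (rule comp_mor[OF _ PT_obj _ _ pr1_mor]) auto
lemma pr2c_mor: "A \<in> Obj \<Longrightarrow> B \<in> Obj \<Longrightarrow> X \<in> Obj \<Longrightarrow> Y \<in> Obj \<Longrightarrow> f \<in> Mor A (PT X Y) \<Longrightarrow> compose A (pr2 X Y) f \<in> Mor A Y"
  by (rule comp_mor[OF _ PT_obj _ _ pr2_mor]) auto

lemma tensor_H: assumes X: "X \<in> Obj" and Y: "Y \<in> Obj" and X': "X' \<in> Obj" and Y': "Y' \<in> Obj"
  and r: "r \<in> H X Y" and s: "s \<in> H X' Y'"
  shows "rel_tensor pair r s \<in> H (PT X X') (PT Y Y')"
proof -
  have rs: "r \<subseteq> X \<times> Y" "s \<subseteq> X' \<times> Y'" using H_sub[OF X Y r] H_sub[OF X' Y' s] .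
  have XY: "PT X Y \<in> Obj" and XY': "PT X' Y' \<in> Obj" and XX: "PT X X' \<in> Obj" and YY: "PT Y Y' \<in> Obj"
    using PT_obj[OF X Y] PT_obj[OF X' Y'] PT_obj[OF X X'] PT_obj[OF Y Y'] .
  define A where "A = PT (PT X Y) (PT X' Y')"
  have A: "A \<in> Obj" unfolding A_def using PT_obj[OF XY XY'] .
  define P where "P = {pair a b |a b. a \<in> pc r \<and> b \<in> pc s}"
  have dP: "defin A P" unfolding A_def P_def
    by (rule D2[OF XY XY' defin_pc[OF X Y r] defin_pc[OF X' Y' s]])
  have p1: "pr1 (PT X Y) (PT X' Y') \<in> Mor A (PT X Y)" and p2: "pr2 (PT X Y) (PT X' Y') \<in> Mor A (PT X' Y')"
    unfolding A_def using pr1_mor[OF XY XY'] pr2_mor[OF XY XY'] .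
  define m where "m = tup A (tup A (compose A (pr1 X Y) (pr1 (PT X Y) (PT X' Y'))) (compose A (pr1 X' Y') (pr2 (PT X Y) (PT X' Y'))))
     (tup A (compose A (pr2 X Y) (pr1 (PT X Y) (PT X' Y'))) (compose A (pr2 X' Y') (pr2 (PT X Y) (PT X' Y'))))"
  have m: "m \<in> Mor A (PT (PT X X') (PT Y Y'))" unfolding m_def
    by (rule tup_mor[OF XX YY A tup_mor[OF X X' A pr1c_mor[OF A A X Y p1] pr1c_mor[OF A A X' Y' p2]]
                                  tup_mor[OF Y Y' A pr2c_mor[OF A A X Y p1] pr2c_mor[OF A A X' Y' p2]]])
  have d: "defin (PT (PT X X') (PT Y Y')) (m ` P)" by (rule D1[OF A PT_obj[OF XX YY] dP m])
  have "pc (rel_tensor pair r s) = m ` P"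
  proof
    show "pc (rel_tensor pair r s) \<subseteq> m ` P"
    proof
      fix w assume "w \<in> pc (rel_tensor pair r s)"
      then obtain a b where "w = pair a b" "(a, b) \<in> rel_tensor pair r s" by (rule pc_E)
      then obtain x x' y y' where w: "w = pair (pair x x') (pair y y')" "(x, y) \<in> r" "(x', y') \<in> s"
        unfolding rel_tensor_def by blast
      have mem: "x \<in> X" "y \<in> Y" "x' \<in> X'" "y' \<in> Y'" using w rs by auto
      have inP: "pair (pair x y) (pair x' y') \<in> P" unfolding P_def using w(2,3) by auto
      have "m (pair (pair x y) (pair x' y')) = w" using mem w(1) by (simp add: m_def A_def)
      then show "w \<in> m ` P" using inP by blast
    qed
    show "m ` P \<subseteq> pc (rel_tensor pair r s)"
    proof
      fix w assume "w \<in> m ` P"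
      then obtain e where e: "e \<in> P" "w = m e" by blast
      then obtain a b where ab: "e = pair a b" "a \<in> pc r" "b \<in> pc s" unfolding P_def by blast
      obtain x y where a: "a = pair x y" "(x, y) \<in> r" using ab(2) by (rule pc_E)
      obtain x' y' where b: "b = pair x' y'" "(x', y') \<in> s" using ab(3) by (rule pc_E)
      have mem: "x \<in> X" "y \<in> Y" "x' \<in> X'" "y' \<in> Y'" using a b rs by auto
      have "w = pair (pair x x') (pair y y')" using e(2) ab a b mem by (simp add: m_def A_def)
      moreover have "(pair x x', pair y y') \<in> rel_tensor pair r s" unfolding rel_tensor_def using a b by blast
      ultimately show "w \<in> pc (rel_tensor pair r s)" by simp
    qed
  qed
  moreover have "rel_tensor pair r s \<subseteq> PT X X' \<times> PT Y Y'" unfolding rel_tensor_def using rs by auto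
  ultimately show ?thesis using H_intro[OF XX YY] d by simp
qed

lemma trace_H: assumes X: "X \<in> Obj" and Y: "Y \<in> Obj" and U: "U \<in> Obj"
  and r: "r \<in> H (PT X U) (PT Y U)"
  shows "cart_trace pair U r \<in> H X Y"
proof -
  have XU: "PT X U \<in> Obj" and YU: "PT Y U \<in> Obj" using PT_obj[OF X U] PT_obj[OF Y U] .
  have rs: "r \<subseteq> PT X U \<times> PT Y U" using H_sub[OF XU YU r] .
  define A where "A = PT (PT X U) (PT Y U)"
  have A: "A \<in> Obj" unfolding A_def using PT_obj[OF XU YU] .
  have dP: "defin A (pc r)" unfolding A_def by (rule defin_pc[OF XU YU r])
  have p1: "pr1 (PT X U) (PT Y U) \<in> Mor A (PT X U)" and p2: "pr2 (PT X U) (PT Y U) \<in> Mor A (PT Y U)"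
    unfolding A_def using pr1_mor[OF XU YU] pr2_mor[OF XU YU] .
  define f where "f = compose A (pr2 X U) (pr1 (PT X U) (PT Y U))"
  define g where "g = compose A (pr2 Y U) (pr2 (PT X U) (PT Y U))"
  have f: "f \<in> Mor A U" unfolding f_def by (rule pr2c_mor[OF A A X U p1])
  have g: "g \<in> Mor A U" unfolding g_def by (rule pr2c_mor[OF A A Y U p2])
  define m where "m = tup A (compose A (pr1 X U) (pr1 (PT X U) (PT Y U))) (compose A (pr1 Y U) (pr2 (PT X U) (PT Y U)))"
  have m: "m \<in> Mor A (PT X Y)" unfolding m_def
    by (rule tup_mor[OF X Y A pr1c_mor[OF A A X U p1] pr1c_mor[OF A A Y U p2]])
  have dE: "defin A {a\<in>pc r. f a = g a}" by (rule D3[OF A U dP f g])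
  have d: "defin (PT X Y) (m ` {a\<in>pc r. f a = g a})" by (rule D1[OF A PT_obj[OF X Y] dE m])
  have "pc (cart_trace pair U r) = m ` {a\<in>pc r. f a = g a}"
  proof
    show "pc (cart_trace pair U r) \<subseteq> m ` {a\<in>pc r. f a = g a}"
    proof
      fix w assume "w \<in> pc (cart_trace pair U r)"
      then obtain x y where "w = pair x y" "(x, y) \<in> cart_trace pair U r" by (rule pc_E)
      then obtain z where w: "w = pair x y" "z \<in> U" "(pair x z, pair y z) \<in> r"
        unfolding cart_trace_def by blast
      have mem: "x \<in> X" "y \<in> Y" using w rs by auto
      have inP: "pair (pair x z) (pair y z) \<in> pc r" using w(3) by simp
      have fg: "f (pair (pair x z) (pair y z)) = g (pair (pair x z) (pair y z))"
        using mem w(2) by (simp add: f_def g_def A_def)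
      have "m (pair (pair x z) (pair y z)) = w" using mem w by (simp add: m_def A_def)
      then show "w \<in> m ` {a\<in>pc r. f a = g a}" using inP fg by blast
    qed
    show "m ` {a\<in>pc r. f a = g a} \<subseteq> pc (cart_trace pair U r)"
    proof
      fix w assume "w \<in> m ` {a\<in>pc r. f a = g a}"
      then obtain e where e: "e \<in> pc r" "f e = g e" "w = m e" by blast
      obtain a b where ab: "e = pair a b" "(a, b) \<in> r" using e(1) by (rule pc_E)
      have "a \<in> PT X U" "b \<in> PT Y U" using ab rs by auto
      then obtain x z y z' where a: "a = pair x z" "x \<in> X" "z \<in> U" and b: "b = pair y z'" "y \<in> Y" "z' \<in> U"
        by (metis PT_E)
      have "z = z'" using e(2) ab a b by (simp add: f_def g_def A_def)
      moreover have "w = pair x y" using e(3) ab a b by (simp add: m_def A_def)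
      ultimately show "w \<in> pc (cart_trace pair U r)" using ab a b unfolding cart_trace_def by auto
    qed
  qed
  moreover have "cart_trace pair U r \<subseteq> X \<times> Y" unfolding cart_trace_def using rs by auto
  ultimately show ?thesis using H_intro[OF X Y] d by simp
qed

lemma conv_H: assumes X: "X \<in> Obj" and Y: "Y \<in> Obj" and r: "r \<in> H X Y"
  shows "r\<inverse> \<in> H Y X"
proof -
  have rs: "r \<subseteq> X \<times> Y" using H_sub[OF X Y r] .
  define m where "m = tup (PT X Y) (pr2 X Y) (pr1 X Y)"
  have m: "m \<in> Mor (PT X Y) (PT Y X)" unfolding m_def
    by (rule tup_mor[OF Y X PT_obj[OF X Y] pr2_mor[OF X Y] pr1_mor[OF X Y]])
  have d: "defin (PT Y X) (m ` pc r)" by (rule D1[OF PT_obj[OF X Y] PT_obj[OF Y X] defin_pc[OF X Y r] m])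
  have "pc (r\<inverse>) = m ` pc r"
  proof
    show "pc (r\<inverse>) \<subseteq> m ` pc r"
    proof
      fix w assume "w \<in> pc (r\<inverse>)"
      then obtain y x where w: "w = pair y x" "(x, y) \<in> r" by (auto elim: pc_E)
      have "m (pair x y) = w" using w rs by (auto simp: m_def)
      moreover have "pair x y \<in> pc r" using w by simp
      ultimately show "w \<in> m ` pc r" by blast
    qed
    show "m ` pc r \<subseteq> pc (r\<inverse>)"
    proof
      fix w assume "w \<in> m ` pc r"
      then obtain e where e: "e \<in> pc r" "w = m e" by blast
      obtain x y where ab: "e = pair x y" "(x, y) \<in> r" using e(1) by (rule pc_E)
      have "w = pair y x" using e ab rs by (auto simp: m_def)
      then show "w \<in> pc (r\<inverse>)" using ab by simp
    qed
  qed
  moreover have "r\<inverse> \<subseteq> Y \<times> X" using rs by auto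
  ultimately show ?thesis using H_intro[OF Y X] d by simp
qed


lemma assoc_H: assumes X: "X \<in> Obj" and Y: "Y \<in> Obj" and Z: "Z \<in> Obj"
  shows "rel_assoc pair X Y Z \<in> H (PT (PT X Y) Z) (PT X (PT Y Z))"
proof -
  have XY: "PT X Y \<in> Obj" and YZ: "PT Y Z \<in> Obj" using PT_obj[OF X Y] PT_obj[OF Y Z] .
  define A where "A = PT (PT X Y) Z"
  have A: "A \<in> Obj" unfolding A_def using PT_obj[OF XY Z] .
  have p1: "pr1 (PT X Y) Z \<in> Mor A (PT X Y)" and p2: "pr2 (PT X Y) Z \<in> Mor A Z"
    unfolding A_def using pr1_mor[OF XY Z] pr2_mor[OF XY Z] .
  define m where "m = tup A (compose A (pr1 X Y) (pr1 (PT X Y) Z)) (tup A (compose A (pr2 X Y) (pr1 (PT X Y) Z)) (pr2 (PT X Y) Z))"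
  have m: "m \<in> Mor A (PT X (PT Y Z))" unfolding m_def
    by (rule tup_mor[OF X YZ A pr1c_mor[OF A A X Y p1] tup_mor[OF Y Z A pr2c_mor[OF A A X Y p1] p2]])
  have "graph A m = rel_assoc pair X Y Z"
  proof
    show "graph A m \<subseteq> rel_assoc pair X Y Z"
    proof
      fix p assume "p \<in> graph A m"
      then obtain a where a: "p = (a, m a)" "a \<in> A" unfolding graph_def by blast
      then obtain b z where "a = pair b z" "b \<in> PT X Y" "z \<in> Z" unfolding A_def by (metis PT_E)
      moreover then obtain x y where "b = pair x y" "x \<in> X" "y \<in> Y" by (metis PT_E)
      ultimately show "p \<in> rel_assoc pair X Y Z" using a unfolding rel_assoc_def by (auto simp: m_def A_def)
    qed
    show "rel_assoc pair X Y Z \<subseteq> graph A m"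
      unfolding rel_assoc_def graph_def by (auto simp: m_def A_def)
  qed
  then show ?thesis using graph_H[OF A PT_obj[OF X YZ] m] unfolding A_def by simp
qed

lemma lunit_H: assumes X: "X \<in> Obj" shows "rel_lunit pair one X \<in> H (PT {one} X) X"
proof -
  have "graph (PT {one} X) (pr2 {one} X) = rel_lunit pair one X"
    unfolding graph_def rel_lunit_def by (auto elim!: PT_E)
  then show ?thesis using graph_H[OF PT_obj[OF one_obj X] X pr2_mor[OF one_obj X]] by simp
qed

lemma runit_H: assumes X: "X \<in> Obj" shows "rel_runit pair one X \<in> H (PT X {one}) X"
proof -
  have "graph (PT X {one}) (pr1 X {one}) = rel_runit pair one X"
    unfolding graph_def rel_runit_def by (auto elim!: PT_E)
  then show ?thesis using graph_H[OF PT_obj[OF X one_obj] X pr1_mor[OF X one_obj]] by simp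
qed

lemma sym_H: assumes X: "X \<in> Obj" and Y: "Y \<in> Obj" shows "rel_sym pair X Y \<in> H (PT X Y) (PT Y X)"
proof -
  have "graph (PT X Y) (tup (PT X Y) (pr2 X Y) (pr1 X Y)) = rel_sym pair X Y"
    unfolding graph_def rel_sym_def by (auto elim!: PT_E)
  then show ?thesis using graph_H[OF PT_obj[OF X Y] PT_obj[OF Y X]
     tup_mor[OF Y X PT_obj[OF X Y] pr2_mor[OF X Y] pr1_mor[OF X Y]]] by simp
qed


lemma M1: "rel_tensor pair (Id_on X) (Id_on Y) = Id_on (PT X Y)"
  unfolding rel_tensor_def Id_on_def ptimes_def by auto

lemma M2: "rel_tensor pair (f O g) (f' O g') = rel_tensor pair f f' O rel_tensor pair g g'"
  unfolding rel_tensor_def by (auto simp: relcomp_unfold) blast+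

lemma M4: assumes "f \<subseteq> X \<times> X'" "g \<subseteq> Y \<times> Y'" "h \<subseteq> Z \<times> Z'"
  shows "rel_tensor pair (rel_tensor pair f g) h O rel_assoc pair X' Y' Z' = rel_assoc pair X Y Z O rel_tensor pair f (rel_tensor pair g h)"
  using assms unfolding rel_tensor_def rel_assoc_def by (auto simp: relcomp_unfold Id_on_iff)


lemma C3: "f \<subseteq> X \<times> Y \<Longrightarrow> Id_on X O f = f \<and> f O Id_on Y = f"
  by auto

lemma assoc_inv: "rel_assoc pair X Y Z O (rel_assoc pair X Y Z)\<inverse> = Id_on (PT (PT X Y) Z)"
   "(rel_assoc pair X Y Z)\<inverse> O rel_assoc pair X Y Z = Id_on (PT X (PT Y Z))"
  unfolding rel_assoc_def Id_on_def ptimes_def by auto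

lemma lunit_inv: "rel_lunit pair one X O (rel_lunit pair one X)\<inverse> = Id_on (PT {one} X)"
   "(rel_lunit pair one X)\<inverse> O rel_lunit pair one X = Id_on X"
  unfolding rel_lunit_def Id_on_def ptimes_def by auto

lemma runit_inv: "rel_runit pair one X O (rel_runit pair one X)\<inverse> = Id_on (PT X {one})"
   "(rel_runit pair one X)\<inverse> O rel_runit pair one X = Id_on X"
  unfolding rel_runit_def Id_on_def ptimes_def by auto

lemma M6: "f \<subseteq> X \<times> Y \<Longrightarrow> rel_tensor pair (Id_on {one}) f O rel_lunit pair one Y = rel_lunit pair one X O f"
  unfolding rel_tensor_def rel_lunit_def by (auto simp: relcomp_unfold Id_on_iff)

lemma M8: "f \<subseteq> X \<times> Y \<Longrightarrow> rel_tensor pair f (Id_on {one}) O rel_runit pair one Y = rel_runit pair one X O f"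
  unfolding rel_tensor_def rel_runit_def by (auto simp: relcomp_unfold Id_on_iff)

lemma M9: "rel_assoc pair (PT W X) Y Z O rel_assoc pair W X (PT Y Z) =
   (rel_tensor pair (rel_assoc pair W X Y) (Id_on Z) O rel_assoc pair W (PT X Y) Z) O rel_tensor pair (Id_on W) (rel_assoc pair X Y Z)"
  unfolding rel_tensor_def rel_assoc_def ptimes_def by (auto simp: relcomp_unfold Id_on_iff)

lemma M10: "rel_assoc pair X {one} Y O rel_tensor pair (Id_on X) (rel_lunit pair one Y) = rel_tensor pair (rel_runit pair one X) (Id_on Y)"
  unfolding rel_tensor_def rel_assoc_def rel_lunit_def rel_runit_def by (auto simp: relcomp_unfold Id_on_iff)

lemma S2: "f \<subseteq> X \<times> X' \<Longrightarrow> g \<subseteq> Y \<times> Y' \<Longrightarrow> rel_tensor pair f g O rel_sym pair X' Y' = rel_sym pair X Y O rel_tensor pair g f"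
  unfolding rel_tensor_def rel_sym_def by (auto simp: relcomp_unfold Id_on_iff)

lemma S3: "rel_sym pair X Y O rel_sym pair Y X = Id_on (PT X Y)"
  unfolding rel_sym_def Id_on_def ptimes_def by auto

lemma S4: "(rel_assoc pair X Y Z O rel_sym pair X (PT Y Z)) O rel_assoc pair Y Z X =
   (rel_tensor pair (rel_sym pair X Y) (Id_on Z) O rel_assoc pair Y X Z) O rel_tensor pair (Id_on Y) (rel_sym pair X Z)"
  unfolding rel_tensor_def rel_assoc_def rel_sym_def ptimes_def by (auto simp: relcomp_unfold Id_on_iff)

lemma T_tight2: "f \<subseteq> PT X U \<times> PT Y U \<Longrightarrow>
   cart_trace pair U ((rel_tensor pair g (Id_on U) O f) O rel_tensor pair h (Id_on U)) = (g O cart_trace pair U f) O h"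
  unfolding rel_tensor_def cart_trace_def by (auto simp: relcomp_unfold Id_on_iff)

lemma sub_mem: "f \<subseteq> PT A B \<times> PT C D \<Longrightarrow> (pair a b, pair c d) \<in> f \<Longrightarrow> a \<in> A \<and> b \<in> B \<and> c \<in> C \<and> d \<in> D"
  by auto

lemma T_slide: assumes f: "f \<subseteq> PT X U \<times> PT Y U'" and g: "g \<subseteq> U' \<times> U"
  shows "cart_trace pair U (f O rel_tensor pair (Id_on Y) g) = cart_trace pair U' (rel_tensor pair (Id_on X) g O f)"
proof
  show "cart_trace pair U (f O rel_tensor pair (Id_on Y) g) \<subseteq> cart_trace pair U' (rel_tensor pair (Id_on X) g O f)"
  proof clarify
    fix a b assume "(a, b) \<in> cart_trace pair U (f O rel_tensor pair (Id_on Y) g)"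
    then obtain z x' where h: "z \<in> U" "(pair a z, pair b x') \<in> f" "(x', z) \<in> g"
      unfolding cart_trace_def rel_tensor_def by (auto simp: relcomp_unfold Id_on_iff)
    have m: "a \<in> X" "x' \<in> U'" using sub_mem[OF f h(2)] by auto
    have "(pair a x', pair a z) \<in> rel_tensor pair (Id_on X) g" unfolding rel_tensor_def using m h by auto
    then show "(a, b) \<in> cart_trace pair U' (rel_tensor pair (Id_on X) g O f)"
      unfolding cart_trace_def using m h by blast
  qed
  show "cart_trace pair U' (rel_tensor pair (Id_on X) g O f) \<subseteq> cart_trace pair U (f O rel_tensor pair (Id_on Y) g)"
  proof clarify
    fix a b assume "(a, b) \<in> cart_trace pair U' (rel_tensor pair (Id_on X) g O f)"
    then obtain z y' where h: "z \<in> U'" "(pair a y', pair b z) \<in> f" "(z, y') \<in> g"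
      unfolding cart_trace_def rel_tensor_def by (auto simp: relcomp_unfold Id_on_iff)
    have m: "b \<in> Y" "y' \<in> U" using sub_mem[OF f h(2)] g h(3) by auto
    have "(pair b z, pair b y') \<in> rel_tensor pair (Id_on Y) g" unfolding rel_tensor_def using m h by auto
    then show "(a, b) \<in> cart_trace pair U (f O rel_tensor pair (Id_on Y) g)"
      unfolding cart_trace_def using m h by blast
  qed
qed

lemma T_van1: assumes f: "f \<subseteq> PT X {one} \<times> PT Y {one}"
  shows "rel_runit pair one X O cart_trace pair {one} f = f O rel_runit pair one Y"
proof
  show "rel_runit pair one X O cart_trace pair {one} f \<subseteq> f O rel_runit pair one Y"
    unfolding rel_runit_def cart_trace_def using f by (auto simp: relcomp_unfold)
  show "f O rel_runit pair one Y \<subseteq> rel_runit pair one X O cart_trace pair {one} f"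
  proof clarify
    fix a c b assume h: "(a, b) \<in> f" "(b, c) \<in> rel_runit pair one Y"
    then have b: "b = pair c one" "c \<in> Y" unfolding rel_runit_def by auto
    have "a \<in> PT X {one}" using h f by auto
    then obtain x where a: "a = pair x one" "x \<in> X" by (auto elim: PT_E)
    show "(a, c) \<in> rel_runit pair one X O cart_trace pair {one} f"
      unfolding rel_runit_def cart_trace_def using a b h by auto
  qed
qed

lemma T_van2: "f \<subseteq> PT X (PT U V) \<times> PT Y (PT U V) \<Longrightarrow>
   cart_trace pair (PT U V) f = cart_trace pair U (cart_trace pair V ((rel_assoc pair X U V O f) O (rel_assoc pair Y U V)\<inverse>))"
  unfolding rel_assoc_def cart_trace_def ptimes_def by (auto simp: relcomp_unfold Id_on_iff)

lemma T_sup: assumes f: "f \<subseteq> PT X U \<times> PT Y U"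
  shows "cart_trace pair U ((rel_assoc pair Z X U O rel_tensor pair (Id_on Z) f) O (rel_assoc pair Z Y U)\<inverse>)
   = rel_tensor pair (Id_on Z) (cart_trace pair U f)"
proof
  show "cart_trace pair U ((rel_assoc pair Z X U O rel_tensor pair (Id_on Z) f) O (rel_assoc pair Z Y U)\<inverse>)
    \<subseteq> rel_tensor pair (Id_on Z) (cart_trace pair U f)"
    unfolding rel_assoc_def rel_tensor_def cart_trace_def by (auto simp: relcomp_unfold Id_on_iff)
  show "rel_tensor pair (Id_on Z) (cart_trace pair U f) \<subseteq>
     cart_trace pair U ((rel_assoc pair Z X U O rel_tensor pair (Id_on Z) f) O (rel_assoc pair Z Y U)\<inverse>)"
  proof clarify
    fix p q assume "(p, q) \<in> rel_tensor pair (Id_on Z) (cart_trace pair U f)"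
    then obtain w x y u where h: "p = pair w x" "q = pair w y" "w \<in> Z" "u \<in> U" "(pair x u, pair y u) \<in> f"
      unfolding rel_tensor_def cart_trace_def by (auto simp: Id_on_iff)
    have m: "x \<in> X" "y \<in> Y" using sub_mem[OF f h(5)] by auto
    have 1: "(pair (pair w x) u, pair w (pair x u)) \<in> rel_assoc pair Z X U" unfolding rel_assoc_def using h m by auto
    have 2: "(pair w (pair x u), pair w (pair y u)) \<in> rel_tensor pair (Id_on Z) f" unfolding rel_tensor_def using h m by auto
    have 3: "(pair w (pair y u), pair (pair w y) u) \<in> (rel_assoc pair Z Y U)\<inverse>" unfolding rel_assoc_def using h m by auto
    show "(p, q) \<in> cart_trace pair U ((rel_assoc pair Z X U O rel_tensor pair (Id_on Z) f) O (rel_assoc pair Z Y U)\<inverse>)"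
      unfolding cart_trace_def using 1 2 3 h by blast
  qed
qed

lemma T_yank: "cart_trace pair U (rel_sym pair U U) = Id_on U"
  unfolding rel_sym_def cart_trace_def by auto


lemma iso_rel: assumes A: "A \<in> Obj" and B: "B \<in> Obj" and a: "a \<in> H A B" and ai: "a\<inverse> \<in> H B A"
  and e1: "a O a\<inverse> = Id_on A" and e2: "a\<inverse> O a = Id_on B"
  shows "is_iso H rel_cmp Id_on A B a" "cinv H rel_cmp Id_on A B a = a\<inverse>"
proof -
  show "is_iso H rel_cmp Id_on A B a" unfolding is_iso_def rel_cmp_def using a ai e1 e2 by blast
  show "cinv H rel_cmp Id_on A B a = a\<inverse>" unfolding cinv_def rel_cmp_def
  proof (rule the_equality)
    show "a\<inverse> \<in> H B A \<and> a O a\<inverse> = Id_on A \<and> a\<inverse> O a = Id_on B" using ai e1 e2 by blast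
    fix g assume g: "g \<in> H B A \<and> a O g = Id_on A \<and> g O a = Id_on B"
    have gs: "g \<subseteq> B \<times> A" using H_sub[OF B A] g by blast
    have ais: "a\<inverse> \<subseteq> B \<times> A" using H_sub[OF B A ai] .
    have "g = Id_on B O g" using gs by auto
    also have "\<dots> = (a\<inverse> O a) O g" using e2 by simp
    also have "\<dots> = a\<inverse> O (a O g)" by (simp add: O_assoc)
    also have "\<dots> = a\<inverse> O Id_on A" using g by simp
    also have "\<dots> = a\<inverse>" using ais by auto
    finally show "g = a\<inverse>" .
  qed
qed

lemma subcat: "C_subcategory_of_RelC Obj Mor pair"
  unfolding C_subcategory_of_RelC_def
proof (intro conjI ballI)
  fix X Y f assume "X \<in> Obj" "Y \<in> Obj" "f \<in> Mor X Y"
  then show "graph X f \<in> H X Y" by (rule graph_H)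
next
  fix X show "graph X (\<lambda>x\<in>X. x) = Id_on X" by (rule graph_id)
next
  fix X Y Z f g assume X: "X \<in> Obj" and Y: "Y \<in> Obj" and Z: "Z \<in> Obj" and f: "f \<in> Mor X Y" and g: "g \<in> Mor Y Z"
  have fx: "\<And>x. x \<in> X \<Longrightarrow> f x \<in> Y" using mor_app[OF X Y f] .
  show "graph X (compose X g f) = rel_cmp (graph Y g) (graph X f)"
    unfolding graph_def rel_cmp_def using fx by (auto simp: relcomp_unfold)
next
  fix X Y assume X: "X \<in> Obj" and Y: "Y \<in> Obj"
  show "inj_on (graph X) (Mor X Y)"
  proof (rule inj_onI)
    fix f g assume f: "f \<in> Mor X Y" and g: "g \<in> Mor X Y" and e: "graph X f = graph X g"
    have fe: "f \<in> extensional X" using mor_fun[OF X Y f] by (simp add: PiE_iff)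
    have ge: "g \<in> extensional X" using mor_fun[OF X Y g] by (simp add: PiE_iff)
    show "f = g"
    proof (rule extensionalityI[OF fe ge])
      fix x assume x: "x \<in> X"
      then have "(x, f x) \<in> graph X g" using e unfolding graph_def by blast
      then show "f x = g x" unfolding graph_def by auto
    qed
  qed
qed

lemma funpart: assumes hyp: "\<forall>X\<in>Obj. \<forall>Y\<in>Obj. \<forall>f\<in>X \<rightarrow>\<^sub>E Y.
                f \<in> Mor X Y \<longleftrightarrow> is_C_relation Obj Mor pair X Y (graph X f)"
  and X: "X \<in> Obj" and Y: "Y \<in> Obj"
  shows "{r \<in> H X Y. is_function_rel X Y r} = graph X ` Mor X Y"
proof
  show "{r \<in> H X Y. is_function_rel X Y r} \<subseteq> graph X ` Mor X Y"
  proof clarify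
    fix r assume r: "r \<in> H X Y" and fr: "is_function_rel X Y r"
    define f where "f = (\<lambda>x\<in>X. THE y. (x, y) \<in> r)"
    have rs: "r \<subseteq> X \<times> Y" and u: "\<forall>x\<in>X. \<exists>!y. (x, y) \<in> r" using fr unfolding is_function_rel_def by auto
    have fx: "\<And>x. x \<in> X \<Longrightarrow> (x, f x) \<in> r" proof -
      fix x assume "x \<in> X"
      then have "\<exists>!y. (x, y) \<in> r" using u by blast
      then have "(x, THE y. (x, y) \<in> r) \<in> r" by (rule theI')
      then show "(x, f x) \<in> r" using \<open>x \<in> X\<close> unfolding f_def by simp
    qed
    have gr: "graph X f = r"
    proof
      show "graph X f \<subseteq> r" unfolding graph_def using fx by auto
      show "r \<subseteq> graph X f"
      proof clarify
        fix x y assume xy: "(x, y) \<in> r"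
        then have x: "x \<in> X" using rs by auto
        then have "y = f x" using u xy fx by blast
        then show "(x, y) \<in> graph X f" unfolding graph_def using x by auto
      qed
    qed
    have fE: "f \<in> X \<rightarrow>\<^sub>E Y" unfolding f_def using fx rs by (auto simp: f_def)
    have "is_C_relation Obj Mor pair X Y (graph X f)" using r gr unfolding RelHom_def by simp
    then have "f \<in> Mor X Y" using hyp X Y fE by blast
    then show "r \<in> graph X ` Mor X Y" using gr by blast
  qed
  show "graph X ` Mor X Y \<subseteq> {r \<in> H X Y. is_function_rel X Y r}"
  proof
    fix r assume "r \<in> graph X ` Mor X Y"
    then obtain f where f: "f \<in> Mor X Y" and rf: "r = graph X f" by blast
    have "graph X f \<in> H X Y" using graph_H[OF X Y f] .
    moreover have "is_function_rel X Y (graph X f)" unfolding is_function_rel_def graph_def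
      using mor_app[OF X Y f] by auto
    ultimately show "r \<in> {r \<in> H X Y. is_function_rel X Y r}" using rf by blast
  qed
qed


lemma assoc_iso: assumes X: "X \<in> Obj" and Y: "Y \<in> Obj" and Z: "Z \<in> Obj"
  shows "is_iso H rel_cmp Id_on (PT (PT X Y) Z) (PT X (PT Y Z)) (rel_assoc pair X Y Z)"
    "cinv H rel_cmp Id_on (PT (PT X Y) Z) (PT X (PT Y Z)) (rel_assoc pair X Y Z) = (rel_assoc pair X Y Z)\<inverse>"
proof -
  have A: "PT (PT X Y) Z \<in> Obj" and B: "PT X (PT Y Z) \<in> Obj" using PT_obj[OF PT_obj[OF X Y] Z] PT_obj[OF X PT_obj[OF Y Z]] .
  have a: "rel_assoc pair X Y Z \<in> H (PT (PT X Y) Z) (PT X (PT Y Z))" by (rule assoc_H[OF X Y Z])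
  note ai = conv_H[OF A B a]
  show "is_iso H rel_cmp Id_on (PT (PT X Y) Z) (PT X (PT Y Z)) (rel_assoc pair X Y Z)"
    "cinv H rel_cmp Id_on (PT (PT X Y) Z) (PT X (PT Y Z)) (rel_assoc pair X Y Z) = (rel_assoc pair X Y Z)\<inverse>"
    using iso_rel[OF A B a ai assoc_inv] by auto
qed

lemma lunit_iso: assumes X: "X \<in> Obj"
  shows "is_iso H rel_cmp Id_on (PT {one} X) X (rel_lunit pair one X)"
proof -
  have A: "PT {one} X \<in> Obj" using PT_obj one_obj X by blast
  have a: "rel_lunit pair one X \<in> H (PT {one} X) X" by (rule lunit_H[OF X])
  show ?thesis using iso_rel[OF A X a conv_H[OF A X a] lunit_inv] by auto
qed

lemma runit_iso: assumes X: "X \<in> Obj"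
  shows "is_iso H rel_cmp Id_on (PT X {one}) X (rel_runit pair one X)"
proof -
  have A: "PT X {one} \<in> Obj" using PT_obj one_obj X by blast
  have a: "rel_runit pair one X \<in> H (PT X {one}) X" by (rule runit_H[OF X])
  show ?thesis using iso_rel[OF A X a conv_H[OF A X a] runit_inv] by auto
qed

lemma monoidal: "is_monoidal_category Obj H rel_cmp Id_on PT (rel_tensor pair) {one}
   (rel_assoc pair) (rel_lunit pair one) (rel_runit pair one)"
  unfolding is_monoidal_category_def is_category_def
  apply (intro conjI ballI)
  subgoal by (rule id_H)
  subgoal unfolding rel_cmp_def by (rule comp_H)
  subgoal premises p unfolding rel_cmp_def using C3[OF H_sub[OF p]] by simp
  subgoal premises p unfolding rel_cmp_def using C3[OF H_sub[OF p]] by simp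
  subgoal unfolding rel_cmp_def by (simp add: O_assoc)
  subgoal by (rule one_obj)
  subgoal by (rule PT_obj)
  subgoal by (rule tensor_H)
  subgoal by (rule M1)
  subgoal unfolding rel_cmp_def by (rule M2)
  subgoal by (rule assoc_iso(1))
  subgoal unfolding rel_cmp_def by (rule M4; rule H_sub)
  subgoal by (rule lunit_iso)
  subgoal unfolding rel_cmp_def by (rule M6; rule H_sub)
  subgoal by (rule runit_iso)
  subgoal unfolding rel_cmp_def by (rule M8; rule H_sub)
  subgoal unfolding rel_cmp_def by (rule M9)
  subgoal unfolding rel_cmp_def by (rule M10)
  done


lemma symmetric: "is_symmetric_monoidal_category Obj H rel_cmp Id_on PT (rel_tensor pair) {one}
   (rel_assoc pair) (rel_lunit pair one) (rel_runit pair one) (rel_sym pair)"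
  unfolding is_symmetric_monoidal_category_def
  apply (intro conjI ballI)
  subgoal by (rule monoidal)
  subgoal by (rule sym_H)
  subgoal premises p unfolding rel_cmp_def by (rule S2[OF H_sub[OF p(1,3,5)] H_sub[OF p(2,4,6)]])
  subgoal unfolding rel_cmp_def by (rule S3)
  subgoal unfolding rel_cmp_def by (rule S4)
  done

lemma traced: "is_traced_symmetric_monoidal_category Obj H rel_cmp Id_on PT (rel_tensor pair) {one}
   (rel_assoc pair) (rel_lunit pair one) (rel_runit pair one) (rel_sym pair) (\<lambda>U X Y r. cart_trace pair U r)"
  unfolding is_traced_symmetric_monoidal_category_def
  apply (intro conjI ballI)
  subgoal by (rule symmetric)
  subgoal by (rule trace_H)
  subgoal premises p unfolding rel_cmp_def
    by (rule T_tight2[OF H_sub[OF PT_obj[OF p(2,1)] PT_obj[OF p(3,1)] p(6)]])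
  subgoal premises p unfolding rel_cmp_def
    by (rule T_slide[OF H_sub[OF PT_obj[OF p(3,1)] PT_obj[OF p(4,2)] p(5)] H_sub[OF p(2,1,6)]])
  subgoal premises p unfolding rel_cmp_def
    by (rule T_van1[OF H_sub[OF PT_obj[OF p(1) one_obj] PT_obj[OF p(2) one_obj] p(3)]])
  subgoal premises p unfolding rel_cmp_def assoc_iso(2)[OF p(4,1,2)]
    by (rule T_van2[OF H_sub[OF PT_obj[OF p(3) PT_obj[OF p(1,2)]] PT_obj[OF p(4) PT_obj[OF p(1,2)]] p(5)]])
  subgoal premises p unfolding rel_cmp_def assoc_iso(2)[OF p(4,3,1)]
    by (rule T_sup[OF H_sub[OF PT_obj[OF p(2,1)] PT_obj[OF p(3,1)] p(5)]])
  subgoal by (rule T_yank)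
  done

end

theorem theorem5p1:
  fixes Obj :: "'u set set"
    and Mor :: "'u set \<Rightarrow> 'u set \<Rightarrow> ('u \<Rightarrow> 'u) set"
    and pair :: "'u \<Rightarrow> 'u \<Rightarrow> 'u"
    and one :: 'u
  assumes "injective_pairing pair"
    and "concrete_category Obj Mor"
    and "set_products_are_products Obj Mor pair one"
    and "set_equalizers_are_equalizers Obj Mor"
    and "graphs_are_ranges Obj Mor pair"
  shows "is_traced_symmetric_monoidal_category Obj (RelHom Obj Mor pair) rel_cmp Id_on
           (ptimes pair) (rel_tensor pair) {one} (rel_assoc pair) (rel_lunit pair one)
           (rel_runit pair one) (rel_sym pair) (\<lambda>U X Y r. cart_trace pair U r)
         \<and> C_subcategory_of_RelC Obj Mor pair
         \<and> ((\<forall>X\<in>Obj. \<forall>Y\<in>Obj. \<forall>f\<in>X \<rightarrow>\<^sub>E Y.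
                f \<in> Mor X Y \<longleftrightarrow> is_C_relation Obj Mor pair X Y (graph X f))
            \<longrightarrow> (\<forall>X\<in>Obj. \<forall>Y\<in>Obj.
                 {r \<in> RelHom Obj Mor pair X Y. is_function_rel X Y r} = graph X ` Mor X Y))"
proof -
  interpret relC Obj Mor pair one using assms by unfold_locales
  have 3: "(\<forall>X\<in>Obj. \<forall>Y\<in>Obj. \<forall>f\<in>X \<rightarrow>\<^sub>E Y.
                f \<in> Mor X Y \<longleftrightarrow> is_C_relation Obj Mor pair X Y (graph X f))
            \<longrightarrow> (\<forall>X\<in>Obj. \<forall>Y\<in>Obj.
                 {r \<in> RelHom Obj Mor pair X Y. is_function_rel X Y r} = graph X ` Mor X Y)"
  proof (intro impI ballI)
    fix X Y assume h: "\<forall>X\<in>Obj. \<forall>Y\<in>Obj. \<forall>f\<in>X \<rightarrow>\<^sub>E Y.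
                f \<in> Mor X Y \<longleftrightarrow> is_C_relation Obj Mor pair X Y (graph X f)"
      and X: "X \<in> Obj" and Y: "Y \<in> Obj"
    show "{r \<in> RelHom Obj Mor pair X Y. is_function_rel X Y r} = graph X ` Mor X Y"
      by (rule funpart[OF h X Y])
  qed
  show ?thesis by (intro conjI traced subcat 3)
qed

end
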